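(* Let $H\in\mathbb{R}^{n\times d}$ have rank $h$, $\Sigma\in\mathbb{R}^{n\times n}$ symmetric positive definite, and let $\Gamma_i$ be the empirical covariances of deterministic EKI iterates $v_{i+1}^{(j)}=v_i^{(j)}+\Gamma_iH^\top(H\Gamma_iH^\top+\Sigma)^{-1}(y-Hv_i^{(j)})$. Fix $i\ge0$, and let $w_1,\dots,w_n$ and $r$ be as in the context, with $H\Gamma_iH^\top w_\ell=\delta_{\ell,i}\Sigma w_\ell$. For $\ell=1,\dots,r$ let $u_\ell=\frac1{\delta_{\ell,i}}\Gamma_iH^\top w_\ell$, and if $h>r$, for $\ell=r+1,\dots,h$ let $u_\ell=H^+\Sigma w_\ell$. Then for all $\ell\le h$, $u_\ell$ is an eigenvector of $\Gamma_iH^\top\Sigma^{-1}H$ with eigenvalue $\delta_{\ell,i}$, i.e. $\Gamma_iH^\top\Sigma^{-1}Hu_\ell=\delta_{\ell,i}u_\ell$, and conversely $w_\ell=\Sigma^{-1}Hu_\ell$ for all $\ell\le h$.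
   Context: $H^+=(H^\top\Sigma^{-1}H)^\dagger H^\top\Sigma^{-1}$ with $\dagger$ the Moore–Penrose pseudoinverse. Empirical covariance $\Gamma_i=\frac1{J-1}\sum_j(v_i^{(j)}-\bar v_i)(v_i^{(j)}-\bar v_i)^\top$. $r$ is the number of positive eigenvalues of the pencil $(H\Gamma_iH^\top,\Sigma)$, and $w_1,\dots,w_n$ is a $\Sigma$-orthogonal basis of $\mathbb{R}^n$ of generalized eigenvectors of this pencil with: $w_1,\dots,w_r\in\mathsf{Ran}(\Sigma^{-1}H)$ having positive eigenvalues; $w_{r+1},\dots,w_h\in\mathsf{Ran}(\Sigma^{-1}H)$ having eigenvalue zero; $w_{h+1},\dots,w_n$ a basis of $\mathsf{Ker}(H^\top)$. *)

theory Defs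
  imports "HOL-Analysis.Analysis"
begin

definition mp_pinv :: "real^'n^'m \<Rightarrow> real^'m^'n" where
  "mp_pinv A = (THE X. A ** X ** A = A \<and> X ** A ** X = X \<and>
                       transpose (A ** X) = A ** X \<and> transpose (X ** A) = X ** A)"

definition wpinv :: "real^'d^'n \<Rightarrow> real^'n^'n \<Rightarrow> real^'n^'d" where
  "wpinv H S = mp_pinv (transpose H ** matrix_inv S ** H) ** transpose H ** matrix_inv S"

definition outer :: "real^'a \<Rightarrow> real^'b \<Rightarrow> real^'b^'a" where
  "outer x z = (\<chi> a b. x $ a * z $ b)"

definition ens_mean :: "nat \<Rightarrow> (nat \<Rightarrow> real^'d) \<Rightarrow> real^'d" where
  "ens_mean J v = (1 / real J) *\<^sub>R (\<Sum>j\<in>{1..J}. v j)"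

definition emp_cov :: "nat \<Rightarrow> (nat \<Rightarrow> real^'d) \<Rightarrow> real^'d^'d" where
  "emp_cov J v = (1 / (real J - 1)) *\<^sub>R
     (\<Sum>j\<in>{1..J}. outer (v j - ens_mean J v) (v j - ens_mean J v))"

definition eki_step :: "real^'d^'n \<Rightarrow> real^'n^'n \<Rightarrow> real^'n \<Rightarrow> nat \<Rightarrow>
                        (nat \<Rightarrow> real^'d) \<Rightarrow> (nat \<Rightarrow> real^'d)" where
  "eki_step H S y J v = (\<lambda>j. v j +
     (emp_cov J v ** transpose H ** matrix_inv (H ** emp_cov J v ** transpose H + S))
       *v (y - H *v v j))"

definition eki_iter :: "real^'d^'n \<Rightarrow> real^'n^'n \<Rightarrow> real^'n \<Rightarrow> nat \<Rightarrow>
                        (nat \<Rightarrow> real^'d) \<Rightarrow> nat \<Rightarrow> (nat \<Rightarrow> real^'d)" where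
  "eki_iter H S y J v0 i = (eki_step H S y J ^^ i) v0"

definition eki_Gamma :: "real^'d^'n \<Rightarrow> real^'n^'n \<Rightarrow> real^'n \<Rightarrow> nat \<Rightarrow>
                        (nat \<Rightarrow> real^'d) \<Rightarrow> nat \<Rightarrow> real^'d^'d" where
  "eki_Gamma H S y J v0 i = emp_cov J (eki_iter H S y J v0 i)"

end

theory Submission
  imports Defs
begin

lemma inner_tr: "(transpose A *v x) \<bullet> y = x \<bullet> ((A::real^'n^'m) *v y)"
  by (simp add: dot_lmul_matrix)

lemma inner_tr2: "(A *v x) \<bullet> y = x \<bullet> (transpose (A::real^'n^'m) *v y)"
  by (metis inner_tr transpose_transpose)

lemma vec_eq_inner: "(\<And>z. a \<bullet> z = b \<bullet> z) \<Longrightarrow> a = (b::real^'n)"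
  by (metis eq_iff_diff_eq_0 inner_diff_left inner_eq_zero_iff)

lemma matrix_inv_works:
  assumes "invertible (A::real^'n^'n)"
  shows "A ** matrix_inv A = mat 1 \<and> matrix_inv A ** A = mat 1"
  using assms unfolding invertible_def matrix_inv_def by (rule someI_ex)

lemma inj_invertible:
  assumes "\<And>x. (A::real^'n^'n) *v x = 0 \<Longrightarrow> x = 0"
  shows "invertible A"
  using assms invertible_left_inverse matrix_left_invertible_ker by blast

lemma sum_mat_vec: "(sum f A) *v x = (\<Sum>a\<in>A. f a *v (x::real^'n))"
proof (induction A rule: infinite_finite_induct)
  case (infinite A) then show ?case by simp
next
  case empty then show ?case by simp
next
  case (insert a A) then show ?case by (simp add: matrix_vector_mult_add_rdistrib)
qed

lemma pinv_unique:
  fixes A :: "real^'n^'m" and X Y :: "real^'m^'n"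
  assumes X: "A ** X ** A = A" "X ** A ** X = X" "transpose (A ** X) = A ** X" "transpose (X ** A) = X ** A"
  and Y: "A ** Y ** A = A" "Y ** A ** Y = Y" "transpose (A ** Y) = A ** Y" "transpose (Y ** A) = Y ** A"
  shows "X = Y"
proof -
  have "X = X ** (A ** X)" using X(2) by (simp add: matrix_mul_assoc)
  also have "\<dots> = X ** transpose (A ** X)" using X(3) by simp
  also have "\<dots> = X ** transpose X ** transpose A" by (simp add: matrix_transpose_mul matrix_mul_assoc)
  also have "\<dots> = X ** transpose X ** transpose (A ** Y ** A)" using Y(1) by simp
  also have "\<dots> = X ** (transpose (A ** X) ** transpose (A ** Y))" by (simp add: matrix_transpose_mul matrix_mul_assoc)
  also have "\<dots> = X ** (A ** X ** (A ** Y))" using X(3) Y(3) by simp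
  also have "\<dots> = X ** A ** Y" using X(1) by (simp add: matrix_mul_assoc)
  finally have 1: "X = X ** A ** Y" .
  have "Y = (Y ** A) ** Y" using Y(2) by (simp add: matrix_mul_assoc)
  also have "\<dots> = transpose (Y ** A) ** Y" using Y(4) by simp
  also have "\<dots> = transpose A ** transpose Y ** Y" by (simp add: matrix_transpose_mul matrix_mul_assoc)
  also have "\<dots> = transpose (A ** X ** A) ** transpose Y ** Y" using X(1) by simp
  also have "\<dots> = (transpose (X ** A) ** transpose (Y ** A)) ** Y" by (simp add: matrix_transpose_mul matrix_mul_assoc)
  also have "\<dots> = (X ** A ** (Y ** A)) ** Y" using X(4) Y(4) by simp
  also have "\<dots> = X ** A ** (Y ** A ** Y)" by (simp add: matrix_mul_assoc)
  also have "\<dots> = X ** A ** Y" using Y(2) by simp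
  finally show ?thesis using 1 by simp
qed

lemma proj_exists:
  fixes V :: "(real^'n) set"
  assumes "subspace V"
  shows "\<exists>Q::real^'n^'n. transpose Q = Q \<and> (\<forall>x. Q *v x \<in> V) \<and> (\<forall>x\<in>V. Q *v x = x)
           \<and> (\<forall>x. \<forall>v\<in>V. (x - Q *v x) \<bullet> v = 0)"
proof -
  obtain T where T: "pairwise orthogonal T" "span T = V"
    using orthogonal_basis_subspace[OF assms] by metis
  have fin: "finite T" using T(1) pairwise_orthogonal_imp_finite by blast
  define p where "p x = (\<Sum>b\<in>T. (b \<bullet> x / (b \<bullet> b)) *\<^sub>R b)" for x :: "real^'n"
  have lin: "linear p"
  proof (rule linearI)
    fix x y :: "real^'n" and c :: real
    show "p (x + y) = p x + p y"
      unfolding p_def by (simp add: inner_add_right add_divide_distrib scaleR_add_left sum.distrib)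
    show "p (c *\<^sub>R x) = c *\<^sub>R p x"
      unfolding p_def scaleR_sum_right
    proof (intro sum.cong refl)
      fix b assume "b \<in> T"
      have "b \<bullet> (c *\<^sub>R x) / (b \<bullet> b) = c * (b \<bullet> x / (b \<bullet> b))"
        by (simp only: inner_scaleR_right times_divide_eq_right)
      then show "(b \<bullet> (c *\<^sub>R x) / (b \<bullet> b)) *\<^sub>R b = c *\<^sub>R ((b \<bullet> x / (b \<bullet> b)) *\<^sub>R b)"
        by (simp only: scaleR_scaleR)
    qed
  qed
  define Q where "Q = matrix p"
  have Qp: "Q *v x = p x" for x unfolding Q_def using lin by (simp add: matrix_works)
  have inV: "p x \<in> V" for x
  proof -
    have "p x \<in> span T" unfolding p_def by (rule span_sum, rule span_mul, rule span_base, assumption)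
    then show ?thesis using T(2) by simp
  qed
  have orth: "(x - p x) \<bullet> v = 0" if "v \<in> V" for x v
    using Gram_Schmidt_step[OF T(1), of v x] that T(2) unfolding p_def
    by (simp add: orthogonal_def inner_commute)
  have fixV: "p x = x" if "x \<in> V" for x
  proof -
    have "x - p x \<in> V" using that inV assms subspace_diff by blast
    then have "(x - p x) \<bullet> (x - p x) = 0" using orth by blast
    then show ?thesis by simp
  qed
  have symm: "transpose Q = Q"
  proof (subst matrix_eq, intro allI)
    fix x
    show "transpose Q *v x = Q *v x"
    proof (rule vec_eq_inner)
      fix z
      have "(transpose Q *v x) \<bullet> z = x \<bullet> p z" by (simp only: inner_tr Qp)
      also have "\<dots> = (p x + (x - p x)) \<bullet> p z" by simp
      also have "\<dots> = p x \<bullet> p z" using orth[of "p z" x] inV by (simp add: inner_diff_left)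
      also have "\<dots> = p x \<bullet> (p z + (z - p z))" using orth[of "p x" z] inV by (simp add: inner_diff_right inner_commute)
      also have "\<dots> = (Q *v x) \<bullet> z" by (simp add: Qp)
      finally show "(transpose Q *v x) \<bullet> z = (Q *v x) \<bullet> z" .
    qed
  qed
  show ?thesis using symm inV fixV orth by (auto simp: Qp)
qed

lemma mv: "(A ** B) *v x = A *v (B *v (x::real^'k))" for A :: "real^'n^'m"
  by (simp add: matrix_vector_mul_assoc)

lemma pinv_sym_exists:
  fixes M :: "real^'n^'n"
  assumes sym: "transpose M = M"
  shows "\<exists>X. M ** X ** M = M \<and> X ** M ** X = X \<and> transpose (M ** X) = M ** X \<and> transpose (X ** M) = X ** M"
proof -
  define V where "V = range ((*v) M)"
  have sV: "subspace V" unfolding V_def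
  proof (unfold subspace_def, intro conjI ballI allI)
    show "0 \<in> range ((*v) M)" by (metis matrix_vector_mult_0_right rangeI)
    fix x y assume "x \<in> range ((*v) M)" "y \<in> range ((*v) M)"
    then obtain a b where "x = M *v a" "y = M *v b" by blast
    then have "x + y = M *v (a + b)" by (simp add: matrix_vector_right_distrib)
    then show "x + y \<in> range ((*v) M)" by blast
  next
    fix c :: real and x assume "x \<in> range ((*v) M)"
    then obtain a where "x = M *v a" by blast
    then have "c *\<^sub>R x = M *v (c *\<^sub>R a)" by (simp add: matrix_vector_mult_scaleR)
    then show "c *\<^sub>R x \<in> range ((*v) M)" by blast
  qed
  obtain Q :: "real^'n^'n" where Qs: "transpose Q = Q" and QV: "\<And>x. Q *v x \<in> V"
    and Qfix: "\<And>x. x \<in> V \<Longrightarrow> Q *v x = x" and Qorth: "\<And>x v. v \<in> V \<Longrightarrow> (x - Q *v x) \<bullet> v = 0"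
    using proj_exists[OF sV] by blast
  have MM: "(M *v z) \<bullet> (M *v z) = z \<bullet> (M *v (M *v z))" for z
    by (metis inner_tr sym)
  have MV: "M *v x \<in> V" for x unfolding V_def by blast
  have MQ: "M *v (Q *v x) = M *v x" for x
  proof -
    define z where "z = x - Q *v x"
    have "z \<bullet> (M *v (M *v z)) = 0" unfolding z_def using Qorth MV by blast
    then have "M *v z = 0" using MM[of z] by (metis inner_eq_zero_iff)
    then show ?thesis unfolding z_def by (simp add: matrix_vector_mult_diff_distrib)
  qed
  have QM: "Q *v (M *v x) = M *v x" for x using Qfix MV by blast
  have QQ: "Q *v (Q *v x) = Q *v x" for x using Qfix QV by blast
  define T where "T = M + mat 1 - Q"
  have Tv: "T *v x = M *v x + x - Q *v x" for x
    unfolding T_def by (simp add: matrix_vector_mult_add_rdistrib matrix_vector_mult_diff_rdistrib)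
  have Tinj: "x = 0" if "T *v x = 0" for x
  proof -
    define a where "a = M *v x"
    define b where "b = x - Q *v x"
    have ab: "a + b = 0" using that Tv unfolding a_def b_def by (simp add: algebra_simps)
    have "b \<bullet> a = 0" unfolding a_def b_def using Qorth MV by blast
    then have "a \<bullet> a = 0" using ab by (metis add.commute add_cancel_right_left inner_commute inner_zero_left minus_add_cancel inner_minus_left neg_eq_iff_add_eq_0)
    then have a0: "a = 0" by simp
    then have "b = 0" using ab by simp
    then have "x = Q *v x" unfolding b_def by simp
    then obtain z where xz: "x = M *v z" using QV unfolding V_def by (metis rangeE)
    have "M *v (M *v z) = 0" using a0 xz unfolding a_def by simp
    then have "(M *v z) \<bullet> (M *v z) = 0" using MM[of z] by simp
    then show ?thesis using xz by simp
  qed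
  have Tinv: "invertible T" using Tinj inj_invertible by blast
  define N where "N = matrix_inv T"
  have NT: "N *v (T *v x) = x" and TN: "T *v (N *v x) = x" for x
    using matrix_inv_works[OF Tinv] unfolding N_def by (simp_all add: mv[symmetric])
  have TQ: "T *v (Q *v x) = M *v x" for x using Tv MQ QQ by simp
  have QT: "Q *v (T *v x) = M *v x" for x
    using Tv QM QQ by (simp add: matrix_vector_right_distrib matrix_vector_mult_diff_distrib)
  have MN: "M *v (N *v y) = Q *v y" for y by (metis QT TN)
  have NM: "N *v (M *v x) = Q *v x" for x by (metis TQ NT)
  have NQ: "N *v (Q *v y) = Q *v (N *v y)" for y by (metis TN NT TQ QT)
  define X where "X = N ** Q"
  have MX: "M ** X = Q" unfolding X_def by (simp add: matrix_eq mv MN QQ)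
  have XM: "X ** M = Q" unfolding X_def by (simp add: matrix_eq mv NM QM)
  have 1: "M ** X ** M = M" using MX by (simp add: matrix_eq mv QM)
  have 2: "X ** M ** X = X" using XM unfolding X_def by (simp add: matrix_eq mv NQ QQ)
  show ?thesis by (intro exI[of _ X] conjI 1 2) (simp_all add: MX XM Qs)
qed

lemma pinv_sym:
  fixes M :: "real^'n^'n"
  assumes sym: "transpose M = M"
  shows "M ** mp_pinv M ** M = M"
proof -
  let ?P = "\<lambda>X. M ** X ** M = M \<and> X ** M ** X = X \<and> transpose (M ** X) = M ** X \<and> transpose (X ** M) = X ** M"
  have "\<exists>!X. ?P X" using pinv_sym_exists[OF sym] pinv_unique by blast
  then have "?P (THE X. ?P X)" by (rule theI')
  then show ?thesis unfolding mp_pinv_def by blast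
qed

lemma outer_mv: "outer x z *v y = (z \<bullet> y) *\<^sub>R (x::real^'a)" for z y :: "real^'b"
  by (simp add: vec_eq_iff outer_def matrix_vector_mult_def inner_vec_def sum_distrib_left sum_distrib_right mult_ac)

lemma scaleR_mv: "(c *\<^sub>R A) *v x = c *\<^sub>R (A *v (x::real^'n))" for A :: "real^'n^'m"
  by (simp add: vec_eq_iff matrix_vector_mult_def sum_distrib_left mult.assoc)

lemma emp_cov_psd:
  fixes v :: "nat \<Rightarrow> real^'d"
  assumes J: "J \<ge> 2" and z0: "z \<bullet> (emp_cov J v *v z) = 0"
  shows "emp_cov J v *v z = 0"
proof -
  define a where "a j = v j - ens_mean J v" for j
  define c :: real where "c = 1 / (real J - 1)"
  have c: "c > 0" using J unfolding c_def by simp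
  have G: "emp_cov J v *v z = c *\<^sub>R (\<Sum>j\<in>{1..J}. (a j \<bullet> z) *\<^sub>R a j)"
    unfolding emp_cov_def a_def[symmetric] c_def[symmetric]
    by (simp add: scaleR_mv sum_mat_vec outer_mv)
  have "z \<bullet> (emp_cov J v *v z) = c * (\<Sum>j\<in>{1..J}. (a j \<bullet> z)^2)"
    unfolding G by (simp add: inner_sum_right power2_eq_square inner_commute)
  then have "(\<Sum>j\<in>{1..J}. (a j \<bullet> z)^2) = 0" using z0 c by simp
  then have "\<forall>j\<in>{1..J}. (a j \<bullet> z)^2 = 0" by (subst (asm) sum_nonneg_eq_0_iff) auto
  then show ?thesis unfolding G by simp
qed

theorem proposition3p13:
  fixes H :: "real^'d^'n" and S :: "real^'n^'n" and y :: "real^'n"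
    and J :: nat and v0 :: "nat \<Rightarrow> real^'d" and i :: nat
    and \<Gamma> :: "real^'d^'d"
    and h r :: nat and w :: "nat \<Rightarrow> real^'n" and \<delta> :: "nat \<Rightarrow> real"
    and u :: "nat \<Rightarrow> real^'d"
  assumes rankH: "rank H = h"
    and S_sym: "transpose S = S"
    and S_pd: "\<And>x. x \<noteq> 0 \<Longrightarrow> x \<bullet> (S *v x) > 0"
    and J2: "J \<ge> 2"
    and Gamma_def: "\<Gamma> = eki_Gamma H S y J v0 i"
    and w_inj: "inj_on w {1..CARD('n)}"
    and w_indep: "independent (w ` {1..CARD('n)})"
    and w_span: "span (w ` {1..CARD('n)}) = UNIV"
    and w_orth: "\<And>k l. k \<in> {1..CARD('n)} \<Longrightarrow> l \<in> {1..CARD('n)} \<Longrightarrow> k \<noteq> l \<Longrightarrow>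
                   w k \<bullet> (S *v w l) = 0"
    and w_eig: "\<And>l. l \<in> {1..CARD('n)} \<Longrightarrow>
                   (H ** \<Gamma> ** transpose H) *v w l = \<delta> l *\<^sub>R (S *v w l)"
    and r_def: "r = card {l \<in> {1..CARD('n)}. \<delta> l > 0}"
    and r_le_h: "r \<le> h"
    and w_pos: "\<And>l. l \<in> {1..r} \<Longrightarrow>
                   \<delta> l > 0 \<and> w l \<in> range (\<lambda>x. (matrix_inv S ** H) *v x)"
    and w_zero: "\<And>l. l \<in> {r+1..h} \<Longrightarrow>
                   \<delta> l = 0 \<and> w l \<in> range (\<lambda>x. (matrix_inv S ** H) *v x)"
    and w_ker: "\<And>l. l \<in> {h+1..CARD('n)} \<Longrightarrow> transpose H *v w l = 0"
    and w_ker_span: "span (w ` {h+1..CARD('n)}) = {x. transpose H *v x = 0}"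
    and u_pos: "\<And>l. l \<in> {1..r} \<Longrightarrow>
                   u l = (1 / \<delta> l) *\<^sub>R ((\<Gamma> ** transpose H) *v w l)"
    and u_zero: "\<And>l. l \<in> {r+1..h} \<Longrightarrow> u l = wpinv H S *v (S *v w l)"
  shows "\<forall>l \<in> {1..h}.
           u l \<noteq> 0 \<and>
           (\<Gamma> ** transpose H ** matrix_inv S ** H) *v u l = \<delta> l *\<^sub>R u l \<and>
           w l = (matrix_inv S ** H) *v u l"
proof -
  define Si where "Si = matrix_inv S"
  have Sinj: "x = 0" if "S *v x = 0" for x using S_pd[of x] that by (metis inner_zero_right less_irrefl)
  have Sinv: "invertible S" using Sinj inj_invertible by blast
  have SSi: "S ** Si = mat 1" "Si ** S = mat 1" using matrix_inv_works[OF Sinv] unfolding Si_def by auto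
  have SSiv: "S *v (Si *v x) = x" "Si *v (S *v x) = x" for x
    using SSi by (simp_all add: mv[symmetric])
  have Sisym: "transpose Si = Si"
  proof -
    have "transpose Si ** S = mat 1" using SSi(1) S_sym by (metis matrix_transpose_mul transpose_mat)
    then have "transpose Si = (transpose Si ** S) ** Si" using SSi(1) by (metis matrix_mul_assoc matrix_mul_rid)
    then show ?thesis using \<open>transpose Si ** S = mat 1\<close> by (metis matrix_mul_lid)
  qed
  have Sipd: "y = 0" if "y \<bullet> (Si *v y) = 0" for y
  proof (rule ccontr)
    assume "y \<noteq> 0"
    define z where "z = Si *v y"
    have yz: "y = S *v z" unfolding z_def using SSiv by simp
    have "z \<noteq> 0" using \<open>y \<noteq> 0\<close> yz by auto
    then have "z \<bullet> (S *v z) > 0" by (rule S_pd)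
    then show False using that yz unfolding z_def[symmetric] by (simp add: inner_commute)
  qed
  have Gpsd: "\<Gamma> *v z = 0" if "z \<bullet> (\<Gamma> *v z) = 0" for z
    using emp_cov_psd[OF J2] that unfolding Gamma_def eki_Gamma_def by blast
  have hn: "h \<le> CARD('n)" using rank_bound[of H] rankH by simp
  show ?thesis
  proof
    fix l assume l: "l \<in> {1..h}"
    then have lN: "l \<in> {1..CARD('n)}" using hn by auto
    have w0: "w l \<noteq> 0"
    proof
      assume "w l = 0"
      then have "0 \<in> w ` {1..CARD('n)}" using lN by force
      then show False using w_indep dependent_zero by blast
    qed
    have eig: "H *v (\<Gamma> *v (transpose H *v w l)) = \<delta> l *\<^sub>R (S *v w l)"
      using w_eig[OF lN] by (simp add: mv)
    have key: "(\<Gamma> ** transpose H ** Si ** H) *v u l = \<delta> l *\<^sub>R u l \<and> w l = (Si ** H) *v u l"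
    proof (cases "l \<le> r")
      case True
      then have lr: "l \<in> {1..r}" using l by auto
      have dpos: "\<delta> l > 0" using w_pos[OF lr] by blast
      have ul: "u l = (1 / \<delta> l) *\<^sub>R (\<Gamma> *v (transpose H *v w l))" using u_pos[OF lr] by (simp add: mv)
      have "(Si ** H) *v u l = (1 / \<delta> l) *\<^sub>R (Si *v (H *v (\<Gamma> *v (transpose H *v w l))))"
        by (simp only: ul mv matrix_vector_mult_scaleR)
      also have "\<dots> = (1 / \<delta> l) *\<^sub>R (Si *v (\<delta> l *\<^sub>R (S *v w l)))" by (simp only: eig)
      also have "\<dots> = w l" using dpos by (simp add: matrix_vector_mult_scaleR SSiv)
      finally have 1: "(Si ** H) *v u l = w l" .
      have "(\<Gamma> ** transpose H ** Si ** H) *v u l = \<Gamma> *v (transpose H *v w l)"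
        using 1 by (simp add: mv)
      also have "\<dots> = \<delta> l *\<^sub>R u l" using dpos by (simp add: ul)
      finally show ?thesis using 1 by simp
    next
      case False
      then have lr: "l \<in> {r+1..h}" using l by auto
      have d0: "\<delta> l = 0" using w_zero[OF lr] by blast
      obtain x where wx: "w l = (Si ** H) *v x" using w_zero[OF lr] unfolding Si_def by blast
      define M where "M = transpose H ** Si ** H"
      have Msym: "transpose M = M" unfolding M_def
        by (simp add: matrix_transpose_mul Sisym matrix_mul_assoc)
      have ux: "u l = mp_pinv M *v (M *v x)"
        using u_zero[OF lr] unfolding wpinv_def Si_def[symmetric] M_def[symmetric] wx
        by (simp add: mv SSiv M_def)
      define x' where "x' = x - mp_pinv M *v (M *v x)"
      have PM: "M *v (mp_pinv M *v (M *v x)) = M *v x" using pinv_sym[OF Msym] by (metis mv)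
      have "M *v x' = 0" unfolding x'_def by (simp add: matrix_vector_mult_diff_distrib PM)
      then have "x' \<bullet> (M *v x') = 0" by simp
      moreover have "x' \<bullet> (M *v x') = (H *v x') \<bullet> (Si *v (H *v x'))"
        unfolding M_def by (simp only: mv inner_tr2)
      ultimately have "(H *v x') \<bullet> (Si *v (H *v x')) = 0" by simp
      then have "H *v x' = 0" by (rule Sipd)
      then have Hu: "H *v u l = H *v x" unfolding x'_def ux by (simp add: matrix_vector_mult_diff_distrib)
      have 1: "(Si ** H) *v u l = w l" using Hu wx by (simp add: mv)
      have "(transpose H *v w l) \<bullet> (\<Gamma> *v (transpose H *v w l))
            = w l \<bullet> (H *v (\<Gamma> *v (transpose H *v w l)))" by (simp only: inner_tr)
      also have "\<dots> = 0" using eig d0 by simp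
      finally have "(transpose H *v w l) \<bullet> (\<Gamma> *v (transpose H *v w l)) = 0" .
      then have "\<Gamma> *v (transpose H *v w l) = 0" by (rule Gpsd)
      then have "(\<Gamma> ** transpose H ** Si ** H) *v u l = \<delta> l *\<^sub>R u l"
        using 1 d0 by (simp add: mv)
      then show ?thesis using 1 by simp
    qed
    have "u l \<noteq> 0" using key w0 by auto
    then show "u l \<noteq> 0 \<and>
           (\<Gamma> ** transpose H ** matrix_inv S ** H) *v u l = \<delta> l *\<^sub>R u l \<and>
           w l = (matrix_inv S ** H) *v u l" using key unfolding Si_def by blast
  qed
qed

end
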